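(* Let $f:\mathbf{M}\to\mathbf{M}$ be a measurable map preserving a probability measure $\mu$, and let $(U_n)_{n\ge1}$ be a nested sequence of measurable sets ($U_{n+1}\subset U_n$) with $\mu(U_n)>0$ for all $n$ and $\mu(U_n)\to0$. Assume that $\pi_{\operatorname{ess}}(U_n)\to\infty$ as $n\to\infty$. Then for every $\ell\ge2$ the limit $$\hat\alpha_\ell=\lim_{K\to\infty}\lim_{n\to\infty}\mu_{U_n}\big(\tau^{\ell-1}_{U_n}\le K\big)$$ exists and equals $0$.
   Context: For a measurable set $U$, the first entry time is $\tau_U(x)=\min\{j\ge1: f^j(x)\in U\}$; higher entry times are defined recursively by $\tau_U^1=\tau_U$, $\tau^j_U(x)=\tau^{j-1}_U(x)+\tau_U(f^{\tau^{j-1}_U(x)}(x))$, with the convention $\tau^0_U=0$. $\mu_U$ denotes the conditional measure $\mu_U(A)=\mu(A\cap U)/\mu(U)$. The essential period of a set $U$ of positive measure is $\pi_{\operatorname{ess}}(U)=\min\{k>0:\mu(f^{-k}U\cap U)>0\}$. *)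

theory Defs
  imports "HOL-Probability.Probability"
begin

definition entry_time :: "('a \<Rightarrow> 'a) \<Rightarrow> 'a set \<Rightarrow> 'a \<Rightarrow> enat" where
  "entry_time f U x =
     (if \<exists>j\<ge>1. (f ^^ j) x \<in> U then enat (LEAST j. j \<ge> 1 \<and> (f ^^ j) x \<in> U) else \<infinity>)"

fun higher_entry_time :: "('a \<Rightarrow> 'a) \<Rightarrow> 'a set \<Rightarrow> nat \<Rightarrow> 'a \<Rightarrow> enat" where
  "higher_entry_time f U 0 x = 0"
| "higher_entry_time f U (Suc j) x =
     (case higher_entry_time f U j x of
        \<infinity> \<Rightarrow> \<infinity>
      | enat t \<Rightarrow> enat t + entry_time f U ((f ^^ t) x))"

definition cond_measure :: "'a measure \<Rightarrow> 'a set \<Rightarrow> 'a set \<Rightarrow> real" where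
  "cond_measure M U A = measure M (A \<inter> U) / measure M U"

definition ess_period :: "'a measure \<Rightarrow> ('a \<Rightarrow> 'a) \<Rightarrow> 'a set \<Rightarrow> nat" where
  "ess_period M f U = (LEAST k. k > 0 \<and> measure M ((f ^^ k) -` U \<inter> space M \<inter> U) > 0)"

end

theory Submission
  imports Defs
begin

lemma het_mono_step: "higher_entry_time f U j x \<le> higher_entry_time f U (Suc j) x"
  by (cases "higher_entry_time f U j x") auto

lemma het_ge_entry:
  assumes "j \<ge> 1" shows "entry_time f U x \<le> higher_entry_time f U j x"
  using assms
proof (induction j)
  case 0 then show ?case by simp
next
  case (Suc j)
  show ?case
  proof (cases "j = 0")
    case True then show ?thesis by (simp add: zero_enat_def)
  next
    case False
    then have "entry_time f U x \<le> higher_entry_time f U j x" using Suc by simp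
    also have "\<dots> \<le> higher_entry_time f U (Suc j) x" by (rule het_mono_step)
    finally show ?thesis .
  qed
qed

lemma entry_le_K:
  assumes "entry_time f U x \<le> enat K"
  shows "\<exists>k\<in>{1..K}. (f ^^ k) x \<in> U"
proof -
  have ex: "\<exists>j\<ge>1. (f ^^ j) x \<in> U"
    using assms unfolding entry_time_def by (auto split: if_splits)
  define j where "j = (LEAST j. j \<ge> 1 \<and> (f ^^ j) x \<in> U)"
  have "j \<ge> 1 \<and> (f ^^ j) x \<in> U" unfolding j_def using ex by (rule LeastI_ex)
  moreover have "j \<le> K" using assms ex unfolding entry_time_def j_def by auto
  ultimately show ?thesis by auto
qed

theorem lemma3p1:
  fixes M :: "'a measure" and f :: "'a \<Rightarrow> 'a" and U :: "nat \<Rightarrow> 'a set" and l :: nat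
  assumes "prob_space M"
    and "f \<in> measurable M M" and "distr M M f = M"
    and "\<And>n. U n \<in> sets M"
    and "\<And>n. U (Suc n) \<subseteq> U n"
    and "\<And>n. measure M (U n) > 0"
    and "(\<lambda>n. measure M (U n)) \<longlonglongrightarrow> 0"
    and "filterlim (\<lambda>n. ess_period M f (U n)) at_top sequentially"
    and "l \<ge> 2"
  shows "\<exists>g :: nat \<Rightarrow> real.
           (\<forall>K. (\<lambda>n. cond_measure M (U n)
                   {x \<in> space M. higher_entry_time f (U n) (l - 1) x \<le> enat K}) \<longlonglongrightarrow> g K)
           \<and> g \<longlonglongrightarrow> 0"
proof (intro exI[of _ "\<lambda>_. 0"] conjI allI)
  interpret prob_space M by fact
  show "(\<lambda>_. 0::real) \<longlonglongrightarrow> 0" by simp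
  fix K
  have ev: "\<forall>\<^sub>F n in sequentially. ess_period M f (U n) > K"
    using assms(8) unfolding filterlim_at_top
    by (auto elim!: allE[of _ "Suc K"] eventually_mono)
  show "(\<lambda>n. cond_measure M (U n)
                   {x \<in> space M. higher_entry_time f (U n) (l - 1) x \<le> enat K}) \<longlonglongrightarrow> 0"
  proof (rule tendsto_eventually, rule eventually_mono[OF ev])
    fix n assume gt: "ess_period M f (U n) > K"
    define N where "N k = (f ^^ k) -` U n \<inter> space M \<inter> U n" for k
    have Nsets: "N k \<in> sets M" for k
      unfolding N_def using measurable_compose_n[OF assms(2), of k] assms(4)[of n]
      by (metis measurable_sets sets.Int)
    have N0: "N k \<in> null_sets M" if "k \<in> {1..K}" for k
    proof -
      have "\<not> measure M (N k) > 0"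
      proof
        assume "measure M (N k) > 0"
        then have "ess_period M f (U n) \<le> k" unfolding ess_period_def N_def
          using that by (intro Least_le) auto
        with gt that show False by simp
      qed
      then have "measure M (N k) = 0" using measure_nonneg[of M "N k"] by linarith
      then show ?thesis using Nsets by (simp add: emeasure_eq_measure null_sets_def)
    qed
    have UN: "(\<Union>k\<in>{1..K}. N k) \<in> null_sets M"
      by (rule null_sets_UN') (use N0 in auto)
    define A where "A = {x \<in> space M. higher_entry_time f (U n) (l - 1) x \<le> enat K} \<inter> U n"
    have sub: "A \<subseteq> (\<Union>k\<in>{1..K}. N k)"
    proof
      fix x assume "x \<in> A"
      then have x: "x \<in> space M" "x \<in> U n" "higher_entry_time f (U n) (l - 1) x \<le> enat K"
        unfolding A_def by auto
      have "entry_time f (U n) x \<le> enat K"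
        proof -
        have "l - 1 \<ge> 1" using assms(9) by simp
        then have "entry_time f (U n) x \<le> higher_entry_time f (U n) (l - 1) x"
          by (rule het_ge_entry)
        then show ?thesis using x(3) by (rule order_trans)
      qed
      from entry_le_K[OF this] obtain k where "k \<in> {1..K}" "(f ^^ k) x \<in> U n" by blast
      then show "x \<in> (\<Union>k\<in>{1..K}. N k)" using x unfolding N_def by auto
    qed
    have "measure M A = 0"
    proof (cases "A \<in> sets M")
      case True
      then have "A \<in> null_sets M" using null_sets_subset[OF UN _ sub] by simp
      then show ?thesis by (simp add: measure_eq_emeasure_eq_ennreal null_sets_def)
    next
      case False then show ?thesis by (simp add: measure_notin_sets)
    qed
    then show "cond_measure M (U n)
        {x \<in> space M. higher_entry_time f (U n) (l - 1) x \<le> enat K} = 0"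
      unfolding cond_measure_def A_def by simp
  qed
qed

end
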